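(* Let $1<p<\infty$ and let $\|x\|_p=\big(\sum_{i=1}^n|x_i|^p\big)^{1/p}$ on $\mathbb{R}^n$. Then $\|\cdot\|_p$ is geometrically convex in the tangent plane, doubling in the tangent plane, and balanced in the tangent plane.
   Context: For a norm $\|\cdot\|$ differentiable on $\mathbb{R}^n\setminus\{0\}$, $N(x)$ denotes its gradient at $x\ne0$, $\langle\cdot,\cdot\rangle$ the Euclidean inner product, and $h(x,y)=\|y\|-\langle y,N(x)\rangle$. The norm is: - geometrically convex in the tangent plane if there are $\Lambda>2$, $r>0$ with $h(x,x+2y)\ge\Lambda h(x,x+y)$ whenever $x\ne0$, $\|y\|\le r\|x\|$, $\langle y,N(x)\rangle=0$; - doubling in the tangent plane if there are $T,r>0$ with $h(x,x+2y)\le Th(x,x+y)$ whenever $x\ne0$, $\|y\|\le r\|x\|$, $\langle y,N(x)\rangle=0$; - balanced in the tangent plane if there are $r,K>0$ with $h(x,x+y)\le Kh(x,x-y)$ whenever $x\ne0$, $\|y\|\le r\|x\|$, $\langle y,N(x)\rangle=0$. *)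

theory Defs
  imports "HOL-Analysis.Analysis"
begin

definition pnorm :: "real \<Rightarrow> real^'n \<Rightarrow> real" where
  "pnorm p x = (\<Sum>i\<in>UNIV. \<bar>x $ i\<bar> powr p) powr (1 / p)"

definition grad :: "('a::euclidean_space \<Rightarrow> real) \<Rightarrow> 'a \<Rightarrow> 'a" where
  "grad f x = (SOME g. (f has_derivative (\<lambda>y. g \<bullet> y)) (at x))"

definition hfun :: "('a::euclidean_space \<Rightarrow> real) \<Rightarrow> 'a \<Rightarrow> 'a \<Rightarrow> real" where
  "hfun f x y = f y - y \<bullet> grad f x"

definition geom_convex_tangent :: "('a::euclidean_space \<Rightarrow> real) \<Rightarrow> bool" where
  "geom_convex_tangent f \<longleftrightarrow> (\<exists>\<Lambda>>2. \<exists>r>0. \<forall>x y. x \<noteq> 0 \<longrightarrow> f y \<le> r * f x \<longrightarrow>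
      y \<bullet> grad f x = 0 \<longrightarrow> hfun f x (x + 2 *\<^sub>R y) \<ge> \<Lambda> * hfun f x (x + y))"

definition doubling_tangent :: "('a::euclidean_space \<Rightarrow> real) \<Rightarrow> bool" where
  "doubling_tangent f \<longleftrightarrow> (\<exists>T>0. \<exists>r>0. \<forall>x y. x \<noteq> 0 \<longrightarrow> f y \<le> r * f x \<longrightarrow>
      y \<bullet> grad f x = 0 \<longrightarrow> hfun f x (x + 2 *\<^sub>R y) \<le> T * hfun f x (x + y))"

definition balanced_tangent :: "('a::euclidean_space \<Rightarrow> real) \<Rightarrow> bool" where
  "balanced_tangent f \<longleftrightarrow> (\<exists>r>0. \<exists>K>0. \<forall>x y. x \<noteq> 0 \<longrightarrow> f y \<le> r * f x \<longrightarrow>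
      y \<bullet> grad f x = 0 \<longrightarrow> hfun f x (x + y) \<le> K * hfun f x (x - y))"

end

theory Submission
  imports Defs "HOL-Analysis.Analysis"
begin


definition psi :: "real \<Rightarrow> real \<Rightarrow> real" where
  "psi q z = sgn z * \<bar>z\<bar> powr q"

lemma psi_nonneg: "0 \<le> z \<Longrightarrow> psi q z = z powr q"
  by (cases "z = 0") (auto simp: psi_def)

lemma psi_minus: "psi q (- z) = - psi q z"
  by (simp add: psi_def)

lemma powr_split1: "0 < (b::real) \<Longrightarrow> b powr q = b * b powr (q - 1)"
  using powr_add[of b 1 "q - 1"] by simp

lemma incA:
  fixes q a b :: real
  assumes q: "0 < q" and a: "0 \<le> a" and ab: "a < b"
  shows "min 1 q * (b - a) * b powr (q - 1) \<le> b powr q - a powr q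
       \<and> b powr q - a powr q \<le> max 1 q * (b - a) * b powr (q - 1)"
proof -
  have bpos: "0 < b" using a ab by linarith
  have bq: "b powr q = b * b powr (q - 1)"
    using bpos by (rule powr_split1)
  show ?thesis
  proof (cases "a = 0")
    case True
    have X: "0 \<le> b * b powr (q - 1)" using bpos by simp
    have "min 1 q * (b * b powr (q - 1)) \<le> 1 * (b * b powr (q - 1))"
      using X by (intro mult_right_mono) auto
    moreover have "1 * (b * b powr (q - 1)) \<le> max 1 q * (b * b powr (q - 1))"
      using X by (intro mult_right_mono) auto
    ultimately show ?thesis using True bq by (simp add: mult.assoc)
  next
    case False
    hence apos: "0 < a" using a by simp
    have aq: "a powr q = a * a powr (q - 1)"
      using apos by (rule powr_split1)
    have "\<exists>z>a. z < b \<and> (\<lambda>z. z powr q) b - (\<lambda>z. z powr q) a = (b - a) * (q * z powr (q - 1))"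
      by (rule MVT2[OF ab]) (rule has_real_derivative_powr, use apos in linarith)
    then obtain z where z: "a < z" "z < b" "b powr q - a powr q = (b - a) * (q * z powr (q - 1))"
      by auto
    show ?thesis
    proof (cases "1 \<le> q")
      case True
      have zb: "z powr (q - 1) \<le> b powr (q - 1)"
        using True z apos by (intro powr_mono2) auto
      have ab': "a powr (q - 1) \<le> b powr (q - 1)"
        using True ab apos by (intro powr_mono2) auto
      have up: "b powr q - a powr q \<le> q * (b - a) * b powr (q - 1)"
        using z(3) zb q ab by (simp add: mult_left_mono)
      have "a * a powr (q - 1) \<le> a * b powr (q - 1)" using ab' apos by (simp add: mult_left_mono)
      then have lo: "(b - a) * b powr (q - 1) \<le> b powr q - a powr q"
        using aq bq by (simp add: algebra_simps)
      show ?thesis using up lo True by (simp add: min_def max_def)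
    next
      case False
      have zb: "b powr (q - 1) \<le> z powr (q - 1)"
        using False z apos by (intro powr_mono2') auto
      have ab': "b powr (q - 1) \<le> a powr (q - 1)"
        using False ab apos by (intro powr_mono2') auto
      have lo: "q * (b - a) * b powr (q - 1) \<le> b powr q - a powr q"
        using z(3) zb q ab by (simp add: mult_left_mono)
      have "a * b powr (q - 1) \<le> a * a powr (q - 1)" using ab' apos by (simp add: mult_left_mono)
      then have up: "b powr q - a powr q \<le> (b - a) * b powr (q - 1)"
        using aq bq by (simp add: algebra_simps)
      show ?thesis using up lo False by (simp add: min_def max_def)
    qed
  qed
qed

lemma inc_bounds:
  fixes q a b :: real
  assumes q: "0 < q" and ab: "a < b"
  shows "min 1 q / 2 * ((b - a) * (max \<bar>a\<bar> \<bar>b\<bar>) powr (q - 1)) \<le> psi q b - psi q a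
       \<and> psi q b - psi q a \<le> 2 * max 1 q * ((b - a) * (max \<bar>a\<bar> \<bar>b\<bar>) powr (q - 1))"
proof -
  define M where "M = max \<bar>a\<bar> \<bar>b\<bar>"
  define T where "T = (b - a) * M powr (q - 1)"
  define I where "I = psi q b - psi q a"
  have Mpos: "0 < M" using ab by (auto simp: M_def)
  have X: "0 \<le> T" using ab by (simp add: T_def)
  have lo1: "min 1 q / 2 * T \<le> min 1 q * T"
    using X q by (intro mult_right_mono) auto
  have lo2: "min 1 q / 2 * T \<le> 1/2 * T"
    using X q by (intro mult_right_mono) auto
  have up1: "max 1 q * T \<le> 2 * max 1 q * T"
    using X by (intro mult_right_mono) auto
  have up2: "2 * T \<le> 2 * max 1 q * T"
    using X by (intro mult_right_mono) auto
  consider "0 \<le> a" | "b \<le> 0" | "a < 0" "0 < b" by linarith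
  then have "min 1 q / 2 * T \<le> I \<and> I \<le> 2 * max 1 q * T"
  proof cases
    case 1
    have "T = (b - a) * b powr (q - 1)" using 1 ab by (auto simp: M_def T_def)
    moreover have "I = b powr q - a powr q"
      using 1 ab by (simp add: psi_nonneg I_def)
    ultimately have "min 1 q * T \<le> I \<and> I \<le> max 1 q * T"
      using incA[OF q 1 ab] by (simp add: mult.assoc)
    then show ?thesis using lo1 up1 by linarith
  next
    case 2
    have "T = (- a - - b) * (- a) powr (q - 1)" using 2 ab by (auto simp: M_def T_def)
    moreover have "I = (- a) powr q - (- b) powr q"
      using 2 ab psi_minus[of q a] psi_minus[of q b] psi_nonneg[of "-a" q] psi_nonneg[of "-b" q]
      by (simp add: I_def)
    ultimately have "min 1 q * T \<le> I \<and> I \<le> max 1 q * T"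
      using incA[OF q _ , of "-b" "-a"] 2 ab by (simp add: mult.assoc)
    then show ?thesis using lo1 up1 by linarith
  next
    case 3
    have I: "I = b powr q + (- a) powr q"
      using 3 psi_minus[of q a] psi_nonneg[of "-a" q] psi_nonneg[of b q] by (simp add: I_def)
    have Mq: "M powr q = M * M powr (q - 1)" using Mpos by (rule powr_split1)
    have b1: "b powr q \<le> M powr q" using 3 q by (intro powr_mono2) (auto simp: M_def)
    have a1: "(- a) powr q \<le> M powr q" using 3 q by (intro powr_mono2) (auto simp: M_def)
    have c1: "M powr q \<le> b powr q + (- a) powr q"
      using 3 by (cases "\<bar>a\<bar> \<le> \<bar>b\<bar>") (auto simp: M_def max_def)
    have d1: "M \<le> b - a" "b - a \<le> 2 * M" using 3 by (auto simp: M_def)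
    have Y: "0 \<le> M powr (q - 1)" by simp
    have "(b - a) * M powr (q - 1) \<le> (2 * M) * M powr (q - 1)"
      using d1 Y by (intro mult_right_mono) auto
    hence "1/2 * T \<le> M * M powr (q - 1)"
      unfolding T_def by simp
    moreover have "M * M powr (q - 1) \<le> T"
      using d1 Y unfolding T_def by (simp add: mult_right_mono)
    ultimately show ?thesis using I Mq a1 b1 c1 lo2 up2 by linarith
  qed
  then show ?thesis by (simp add: M_def T_def I_def)
qed

lemma cmp3:
  fixes m A B e :: real
  assumes m: "0 < m" and A: "m \<le> A" "A \<le> 3 * m" and B: "m \<le> B" "B \<le> 3 * m"
  shows "A powr e \<le> 3 powr \<bar>e\<bar> * B powr e"
proof (cases "0 \<le> e")
  case True
  have "A powr e \<le> (3 * m) powr e" using A m True by (intro powr_mono2) auto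
  also have "\<dots> = 3 powr e * m powr e" using m by (simp add: powr_mult)
  also have "\<dots> \<le> 3 powr e * B powr e" using B m True by (intro mult_left_mono powr_mono2) auto
  finally show ?thesis using True by simp
next
  case False
  have "A powr e \<le> m powr e" using A m False by (intro powr_mono2') auto
  also have "m powr e = 3 powr (- e) * (3 * m) powr e"
    using m by (simp add: powr_mult powr_add[symmetric])
  also have "\<dots> \<le> 3 powr (- e) * B powr e" using B m False by (intro mult_left_mono powr_mono2') auto
  finally show ?thesis using False by simp
qed

definition Cq :: "real \<Rightarrow> real" where
  "Cq q = (2 * max 1 q) / (min 1 q / 2) * 3 powr \<bar>q - 1\<bar>"

lemma Cq_ge1: "0 < q \<Longrightarrow> 1 \<le> Cq q"
proof -
  assume q: "0 < q"
  have "1 \<le> (2 * max 1 q) / (min 1 q / 2)" using q by (auto simp: field_simps min_def max_def)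
  moreover have "1 \<le> (3::real) powr \<bar>q - 1\<bar>" by (rule ge_one_powr_ge_zero) auto
  ultimately show ?thesis unfolding Cq_def
    by (metis mult_mono' mult.right_neutral order.trans zero_le_one)
qed

lemma adj_gen:
  fixes q a b c :: real
  assumes q: "0 < q" and ab: "a < b" and cd: "c < d" and len: "b - a = d - c"
    and m: "0 < m" "m \<le> max \<bar>a\<bar> \<bar>b\<bar>" "max \<bar>a\<bar> \<bar>b\<bar> \<le> 3 * m"
           "m \<le> max \<bar>c\<bar> \<bar>d\<bar>" "max \<bar>c\<bar> \<bar>d\<bar> \<le> 3 * m"
  shows "psi q b - psi q a \<le> Cq q * (psi q d - psi q c)"
proof -
  define c0 where "c0 = min 1 q / 2"
  define C0 where "C0 = 2 * max 1 q"
  have c0: "0 < c0" using q by (simp add: c0_def)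
  have h1: "psi q b - psi q a \<le> C0 * ((d - c) * (max \<bar>a\<bar> \<bar>b\<bar>) powr (q - 1))"
    using inc_bounds[OF q ab] len by (simp add: C0_def)
  have h2: "c0 * ((d - c) * (max \<bar>c\<bar> \<bar>d\<bar>) powr (q - 1)) \<le> psi q d - psi q c"
    using inc_bounds[OF q cd] by (simp add: c0_def)
  have h3: "(max \<bar>a\<bar> \<bar>b\<bar>) powr (q - 1) \<le> 3 powr \<bar>q - 1\<bar> * (max \<bar>c\<bar> \<bar>d\<bar>) powr (q - 1)"
    using m by (intro cmp3) auto
  have "psi q b - psi q a \<le> C0 * ((d - c) * (3 powr \<bar>q - 1\<bar> * (max \<bar>c\<bar> \<bar>d\<bar>) powr (q - 1)))"
  proof -
    have "0 \<le> C0 * (d - c)" using cd q by (simp add: C0_def)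
    from mult_left_mono[OF h3 this] show ?thesis using h1 by (simp add: mult.assoc)
  qed
  also have "\<dots> = (C0 / c0 * 3 powr \<bar>q - 1\<bar>) * (c0 * ((d - c) * (max \<bar>c\<bar> \<bar>d\<bar>) powr (q - 1)))"
    using c0 by (simp add: field_simps)
  also have "\<dots> \<le> (C0 / c0 * 3 powr \<bar>q - 1\<bar>) * (psi q d - psi q c)"
    using h2 c0 q by (intro mult_left_mono) (auto simp: C0_def)
  finally show ?thesis by (simp add: Cq_def C0_def c0_def)
qed

lemma adj:
  fixes q b w :: real
  assumes q: "0 < q" and w: "0 < w"
  shows "psi q (b + w) - psi q b \<le> Cq q * (psi q b - psi q (b - w))"
    and "psi q b - psi q (b - w) \<le> Cq q * (psi q (b + w) - psi q b)"
proof -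
  define m where "m = max \<bar>b\<bar> (w / 2)"
  have mp: "0 < m" using w by (simp add: m_def)
  have A: "m \<le> max \<bar>b\<bar> \<bar>b + w\<bar>" "max \<bar>b\<bar> \<bar>b + w\<bar> \<le> 3 * m"
    using w unfolding m_def by (auto simp: max_def abs_if)
  have B: "m \<le> max \<bar>b - w\<bar> \<bar>b\<bar>" "max \<bar>b - w\<bar> \<bar>b\<bar> \<le> 3 * m"
    using w unfolding m_def by (auto simp: max_def abs_if)
  show "psi q (b + w) - psi q b \<le> Cq q * (psi q b - psi q (b - w))"
    using w A B mp by (intro adj_gen[OF q, of _ _ _ _ m]) auto
  show "psi q b - psi q (b - w) \<le> Cq q * (psi q (b + w) - psi q b)"
    using w A B mp by (intro adj_gen[OF q, of _ _ _ _ m]) auto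
qed

lemma psi_strict_mono: "0 < q \<Longrightarrow> a < b \<Longrightarrow> psi q a < psi q b"
proof -
  assume q: "0 < q" and ab: "a < b"
  have "0 < min 1 q / 2 * ((b - a) * (max \<bar>a\<bar> \<bar>b\<bar>) powr (q - 1))"
    using q ab by (intro mult_pos_pos) auto
  then show ?thesis using inc_bounds[OF q ab] by linarith
qed


lemma deriv_abspow:
  fixes p z :: real
  assumes p: "1 < p"
  shows "((\<lambda>t. \<bar>t\<bar> powr p) has_real_derivative p * psi (p - 1) z) (at z)"
proof -
  consider "0 < z" | "z < 0" | "z = 0" by linarith
  then show ?thesis
  proof cases
    case 1
    have "((\<lambda>t. t powr p) has_real_derivative p * z powr (p - 1)) (at z)"
      using 1 by (rule has_real_derivative_powr)
    then have "((\<lambda>t. \<bar>t\<bar> powr p) has_real_derivative p * z powr (p - 1)) (at z)"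
      by (rule has_field_derivative_transform_within_open[of _ _ _ "{0<..}"]) (use 1 in auto)
    then show ?thesis using 1 by (simp add: psi_nonneg)
  next
    case 2
    have "((\<lambda>t. (- t) powr p) has_real_derivative p * (- z) powr (p - real 1) * (- 1)) (at z)"
      by (rule DERIV_fun_powr[OF DERIV_minus[OF DERIV_ident]]) (use 2 in simp)
    then have d: "((\<lambda>t. (- t) powr p) has_real_derivative p * (- z) powr (p - 1) * (- 1)) (at z)"
      by simp
    have "((\<lambda>t. \<bar>t\<bar> powr p) has_real_derivative p * (- z) powr (p - 1) * (- 1)) (at z)"
      by (rule has_field_derivative_transform_within_open[OF d, of "{..<0}"]) (use 2 in simp_all)
    moreover have "psi (p - 1) z = - ((- z) powr (p - 1))"
      using 2 psi_minus[of "p - 1" "-z"] psi_nonneg[of "-z" "p - 1"] by simp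
    ultimately show ?thesis by simp
  next
    case 3
    have lim: "((\<lambda>y. \<bar>y\<bar> powr (p - 1)) \<longlongrightarrow> 0) (at 0)"
    proof (rule tendsto_zero_powrI)
      show "((\<lambda>y::real. \<bar>y\<bar>) \<longlongrightarrow> 0) (at 0)"
        using tendsto_rabs[OF tendsto_ident_at[of "0::real" UNIV]] by simp
    qed (use p in auto)
    have "((\<lambda>y. (\<bar>y\<bar> powr p - \<bar>0\<bar> powr p) / (y - 0)) \<longlongrightarrow> 0) (at 0)"
    proof (rule tendsto_norm_zero_cancel)
      have "\<forall>\<^sub>F y in at (0::real). \<bar>y\<bar> powr (p - 1) = norm ((\<bar>y\<bar> powr p - \<bar>0\<bar> powr p) / (y - 0))"
      proof (rule eventually_mono[OF eventually_at_filter[THEN iffD2, OF always_eventually[of "\<lambda>y. y \<noteq> 0 \<longrightarrow> y \<in> UNIV \<longrightarrow> y \<noteq> (0::real)"]]])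
        show "\<forall>y. y \<noteq> 0 \<longrightarrow> y \<in> UNIV \<longrightarrow> y \<noteq> (0::real)" by simp
        fix y :: real assume "y \<noteq> 0"
        then show "\<bar>y\<bar> powr (p - 1) = norm ((\<bar>y\<bar> powr p - \<bar>0\<bar> powr p) / (y - 0))"
          using powr_split1[of "\<bar>y\<bar>" p] by (simp add: abs_mult)
      qed
      then show "((\<lambda>y. norm ((\<bar>y\<bar> powr p - \<bar>0\<bar> powr p) / (y - 0))) \<longlongrightarrow> 0) (at 0)"
        by (rule Lim_transform_eventually[OF lim])
    qed
    then show ?thesis using 3 by (simp add: has_field_derivative_iff psi_def)
  qed
qed

definition gf :: "real \<Rightarrow> real \<Rightarrow> real \<Rightarrow> real" where
  "gf p a u = \<bar>a + u\<bar> powr p - \<bar>a\<bar> powr p - p * psi (p - 1) a * u"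

lemma gf_0[simp]: "gf p a 0 = 0" by (simp add: gf_def)

lemma gf_sym: "gf p (- a) (- u) = gf p a u"
  by (simp add: gf_def psi_minus abs_minus_commute)
     (metis abs_minus_cancel add.commute minus_add_distrib)

lemma deriv_gf:
  fixes p a c w :: real
  assumes p: "1 < p"
  shows "((\<lambda>w. gf p a (c * w)) has_real_derivative c * p * (psi (p - 1) (a + c * w) - psi (p - 1) a)) (at w)"
proof -
  have "((\<lambda>w. a + c * w) has_real_derivative 0 + c * 1) (at w)"
    by (intro DERIV_add DERIV_const DERIV_cmult DERIV_ident)
  then have lin: "((\<lambda>w. a + c * w) has_real_derivative c) (at w)" by simp
  have d1: "((\<lambda>w. \<bar>a + c * w\<bar> powr p) has_real_derivative p * psi (p - 1) (a + c * w) * c) (at w)"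
    by (rule DERIV_chain2[OF deriv_abspow[OF p] lin])
  have d2: "((\<lambda>w. p * psi (p - 1) a * (c * w)) has_real_derivative p * psi (p - 1) a * c) (at w)"
    using DERIV_cmult[OF DERIV_cmult[OF DERIV_ident, of c], of "p * psi (p - 1) a"] by simp
  have "((\<lambda>w. \<bar>a + c * w\<bar> powr p - \<bar>a\<bar> powr p - p * psi (p - 1) a * (c * w)) has_real_derivative
      p * psi (p - 1) (a + c * w) * c - 0 - p * psi (p - 1) a * c) (at w)"
    by (intro DERIV_diff d1 d2 DERIV_const)
  then show ?thesis by (simp add: gf_def algebra_simps)
qed

lemma mono_aux:
  fixes H H' :: "real \<Rightarrow> real" and u :: real
  assumes u: "0 \<le> u" and d: "\<And>w. (H has_real_derivative H' w) (at w)"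
    and nn: "\<And>w. 0 \<le> w \<Longrightarrow> 0 \<le> H' w"
  shows "H 0 \<le> H u"
  using u by (rule DERIV_nonneg_imp_nondecreasing) (use d nn in blast)

lemma gf_pos_nonneg:
  fixes p a u :: real
  assumes p: "1 < p" and u: "0 \<le> u"
  shows "0 \<le> gf p a u"
proof -
  have "(\<lambda>w. gf p a (1 * w)) 0 \<le> (\<lambda>w. gf p a (1 * w)) u"
  proof (rule mono_aux[OF u deriv_gf[OF p]])
    fix w :: real assume "0 \<le> w"
    then have "psi (p - 1) a \<le> psi (p - 1) (a + 1 * w)"
      using psi_strict_mono[of "p - 1" a "a + w"] p by (cases "w = 0") auto
    then show "0 \<le> 1 * p * (psi (p - 1) (a + 1 * w) - psi (p - 1) a)" using p by simp
  qed
  then show ?thesis by simp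
qed

lemma gf_nonneg: "1 < p \<Longrightarrow> 0 \<le> gf p a u"
  using gf_pos_nonneg[where p=p and a=a and u=u] gf_pos_nonneg[where p=p and a="-a" and u="-u"] gf_sym[of p a u]
  by (cases "0 \<le> u") auto

lemma gf_pos_conv:
  fixes p a u :: real
  assumes p: "1 < p" and u: "0 \<le> u"
  shows "(2 + 2 / Cq (p - 1)) * gf p a u \<le> gf p a (2 * u)"
proof -
  define C where "C = Cq (p - 1)"
  have C: "1 \<le> C" using Cq_ge1[of "p - 1"] p by (simp add: C_def)
  define H where "H = (\<lambda>w. gf p a (2 * w) - (2 + 2 / C) * gf p a (1 * w))"
  have "H 0 \<le> H u"
  proof (rule mono_aux[OF u])
    fix w
    show "(H has_real_derivative 2 * p * (psi (p - 1) (a + 2 * w) - psi (p - 1) a)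
        - (2 + 2 / C) * (1 * p * (psi (p - 1) (a + 1 * w) - psi (p - 1) a))) (at w)"
      unfolding H_def by (intro DERIV_diff DERIV_cmult deriv_gf p)
  next
    fix w :: real assume w: "0 \<le> w"
    show "0 \<le> 2 * p * (psi (p - 1) (a + 2 * w) - psi (p - 1) a)
        - (2 + 2 / C) * (1 * p * (psi (p - 1) (a + 1 * w) - psi (p - 1) a))"
    proof (cases "w = 0")
      case False
      with w have wp: "0 < w" by simp
      have "psi (p - 1) (a + w) - psi (p - 1) (a + w - w) \<le> C * (psi (p - 1) (a + w + w) - psi (p - 1) (a + w))"
        using adj(2)[of "p - 1" w "a + w"] p wp by (simp add: C_def)
      then have A: "psi (p - 1) (a + w) - psi (p - 1) a \<le> C * (psi (p - 1) (a + 2 * w) - psi (p - 1) (a + w))"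
        by (simp add: add.assoc)
      have "(psi (p - 1) (a + w) - psi (p - 1) a) / C \<le> psi (p - 1) (a + 2 * w) - psi (p - 1) (a + w)"
        using A C by (simp add: divide_le_eq mult.commute)
      then have "0 \<le> 2 * p * ((psi (p - 1) (a + 2 * w) - psi (p - 1) (a + w)) - (psi (p - 1) (a + w) - psi (p - 1) a) / C)"
        using p by simp
      then show ?thesis by (simp add: algebra_simps add_divide_distrib diff_divide_distrib)
    qed simp
  qed
  then show ?thesis by (simp add: H_def C_def)
qed

lemma gf_pos_doub:
  fixes p a u :: real
  assumes p: "1 < p" and u: "0 \<le> u"
  shows "gf p a (2 * u) \<le> (2 + 2 * Cq (p - 1)) * gf p a u"
proof -
  define C where "C = Cq (p - 1)"
  define H where "H = (\<lambda>w. (2 + 2 * C) * gf p a (1 * w) - gf p a (2 * w))"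
  have "H 0 \<le> H u"
  proof (rule mono_aux[OF u])
    fix w
    show "(H has_real_derivative (2 + 2 * C) * (1 * p * (psi (p - 1) (a + 1 * w) - psi (p - 1) a))
        - 2 * p * (psi (p - 1) (a + 2 * w) - psi (p - 1) a)) (at w)"
      unfolding H_def by (intro DERIV_diff DERIV_cmult deriv_gf p)
  next
    fix w :: real assume w: "0 \<le> w"
    show "0 \<le> (2 + 2 * C) * (1 * p * (psi (p - 1) (a + 1 * w) - psi (p - 1) a))
        - 2 * p * (psi (p - 1) (a + 2 * w) - psi (p - 1) a)"
    proof (cases "w = 0")
      case False
      with w have wp: "0 < w" by simp
      have "psi (p - 1) (a + w + w) - psi (p - 1) (a + w) \<le> C * (psi (p - 1) (a + w) - psi (p - 1) (a + w - w))"
        using adj(1)[of "p - 1" w "a + w"] p wp by (simp add: C_def)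
      then have A: "psi (p - 1) (a + 2 * w) - psi (p - 1) (a + w) \<le> C * (psi (p - 1) (a + w) - psi (p - 1) a)"
        by (simp add: add.assoc)
      then have "0 \<le> 2 * p * (C * (psi (p - 1) (a + w) - psi (p - 1) a) - (psi (p - 1) (a + 2 * w) - psi (p - 1) (a + w)))"
        using p by simp
      then show ?thesis by (simp add: algebra_simps)
    qed simp
  qed
  then show ?thesis by (simp add: H_def C_def)
qed

lemma gf_pos_bal:
  fixes p a u :: real
  assumes p: "1 < p" and u: "0 \<le> u"
  shows "gf p a u \<le> Cq (p - 1) * gf p a (- u)"
proof -
  define C where "C = Cq (p - 1)"
  define H where "H = (\<lambda>w. C * gf p a ((- 1) * w) - gf p a (1 * w))"
  have "H 0 \<le> H u"
  proof (rule mono_aux[OF u])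
    fix w
    show "(H has_real_derivative C * ((- 1) * p * (psi (p - 1) (a + (- 1) * w) - psi (p - 1) a))
        - 1 * p * (psi (p - 1) (a + 1 * w) - psi (p - 1) a)) (at w)"
      unfolding H_def by (intro DERIV_diff DERIV_cmult deriv_gf p)
  next
    fix w :: real assume w: "0 \<le> w"
    show "0 \<le> C * ((- 1) * p * (psi (p - 1) (a + (- 1) * w) - psi (p - 1) a))
        - 1 * p * (psi (p - 1) (a + 1 * w) - psi (p - 1) a)"
    proof (cases "w = 0")
      case False
      with w have wp: "0 < w" by simp
      have A: "psi (p - 1) (a + w) - psi (p - 1) a \<le> C * (psi (p - 1) a - psi (p - 1) (a - w))"
        using adj(1)[of "p - 1" w a] p wp by (simp add: C_def)
      then have "0 \<le> p * (C * (psi (p - 1) a - psi (p - 1) (a - w)) - (psi (p - 1) (a + w) - psi (p - 1) a))"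
        using p by simp
      then show ?thesis by (simp add: algebra_simps)
    qed simp
  qed
  then show ?thesis by (simp add: H_def C_def)
qed



lemma gf_conv:
  fixes p a u :: real
  assumes p: "1 < p"
  shows "(2 + 2 / Cq (p - 1)) * gf p a u \<le> gf p a (2 * u)"
proof (cases "0 \<le> u")
  case True then show ?thesis using gf_pos_conv[OF p] by blast
next
  case False
  have "(2 + 2 / Cq (p - 1)) * gf p (- a) (- u) \<le> gf p (- a) (2 * (- u))"
    using gf_pos_conv[OF p, where a="-a" and u="-u"] False by simp
  then show ?thesis using gf_sym[of p a u] gf_sym[of p a "2 * u"] by simp
qed

lemma gf_doub:
  fixes p a u :: real
  assumes p: "1 < p"
  shows "gf p a (2 * u) \<le> (2 + 2 * Cq (p - 1)) * gf p a u"
proof (cases "0 \<le> u")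
  case True then show ?thesis using gf_pos_doub[OF p] by blast
next
  case False
  have "gf p (- a) (2 * (- u)) \<le> (2 + 2 * Cq (p - 1)) * gf p (- a) (- u)"
    using gf_pos_doub[OF p, where a="-a" and u="-u"] False by simp
  then show ?thesis using gf_sym[of p a u] gf_sym[of p a "2 * u"] by simp
qed

lemma gf_bal:
  fixes p a u :: real
  assumes p: "1 < p"
  shows "gf p a u \<le> Cq (p - 1) * gf p a (- u)"
proof (cases "0 \<le> u")
  case True then show ?thesis using gf_pos_bal[OF p] by blast
next
  case False
  have "gf p (- a) (- u) \<le> Cq (p - 1) * gf p (- a) (- (- u))"
    using gf_pos_bal[OF p, where a="-a" and u="-u"] False by simp
  then show ?thesis using gf_sym[of p a u] gf_sym[of p a "- u"] by simp
qed

lemma mvt_powr: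
  fixes a b e :: real
  assumes "0 < a" "a < b"
  shows "\<exists>z. a < z \<and> z < b \<and> b powr e - a powr e = (b - a) * (e * z powr (e - 1))"
proof -
  have "\<exists>z>a. z < b \<and> (\<lambda>z. z powr e) b - (\<lambda>z. z powr e) a = (b - a) * (e * z powr (e - 1))"
    by (rule MVT2[OF assms(2)]) (rule has_real_derivative_powr, use assms in linarith)
  then show ?thesis by auto
qed

definition kf :: "real \<Rightarrow> real \<Rightarrow> real \<Rightarrow> real" where
  "kf p S D = (S + D) powr (1 / p) - S powr (1 / p)"

lemma kf_mono:
  fixes p S D D' :: real
  assumes p: "1 < p" and S: "0 < S" and D: "0 \<le> D" "D \<le> D'"
  shows "kf p S D \<le> kf p S D'"
  unfolding kf_def using assms by (simp add: powr_mono2)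

lemma kf_lower:
  fixes p S E :: real
  assumes p: "1 < p" and S: "0 < S" and E: "0 \<le> E"
  shows "E / p * (S + E) powr (1 / p - 1) \<le> kf p S E"
proof (cases "E = 0")
  case False
  with E have Ep: "0 < E" by simp
  obtain z where z: "S < z" "z < S + E" "(S + E) powr (1/p) - S powr (1/p) = (S + E - S) * (1/p * z powr (1/p - 1))"
    using mvt_powr[of S "S + E" "1/p"] S Ep by auto
  have "(S + E) powr (1 / p - 1) \<le> z powr (1 / p - 1)"
    using z S p by (intro powr_mono2') (auto simp: field_simps)
  then have "E / p * (S + E) powr (1 / p - 1) \<le> E / p * z powr (1 / p - 1)"
    using Ep p by (intro mult_left_mono) auto
  then show ?thesis using z(3) by (simp add: kf_def)
qed (simp add: kf_def)

lemma kf_upper: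
  fixes p S D :: real
  assumes p: "1 < p" and S: "0 < S" and D: "0 \<le> D"
  shows "kf p S D \<le> D / p * S powr (1 / p - 1)"
proof (cases "D = 0")
  case False
  with D have Dp: "0 < D" by simp
  obtain z where z: "S < z" "z < S + D" "(S + D) powr (1/p) - S powr (1/p) = (S + D - S) * (1/p * z powr (1/p - 1))"
    using mvt_powr[of S "S + D" "1/p"] S Dp by auto
  have "z powr (1 / p - 1) \<le> S powr (1 / p - 1)"
    using z S p by (intro powr_mono2') (auto simp: field_simps)
  then have "D / p * z powr (1 / p - 1) \<le> D / p * S powr (1 / p - 1)"
    using Dp p by (intro mult_left_mono) auto
  then show ?thesis using z(3) by (simp add: kf_def)
qed (simp add: kf_def)

lemma kf_sub:
  fixes p S D t :: real
  assumes p: "1 < p" and S: "0 < S" and D: "0 \<le> D" and t: "1 \<le> t"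
  shows "kf p S (t * D) \<le> t * kf p S D"
proof (cases "D = 0 \<or> t = 1")
  case True then show ?thesis by (auto simp: kf_def)
next
  case False
  with D t have Dp: "0 < D" and tp: "1 < t" by auto
  obtain z where z: "S < z" "z < S + D" "(S + D) powr (1/p) - S powr (1/p) = (S + D - S) * (1/p * z powr (1/p - 1))"
    using mvt_powr[of S "S + D" "1/p"] S Dp by auto
  have lt: "S + D < S + t * D" using Dp tp by simp
  obtain y where y: "S + D < y" "y < S + t * D" "(S + t * D) powr (1/p) - (S + D) powr (1/p) = (S + t * D - (S + D)) * (1/p * y powr (1/p - 1))"
    using mvt_powr[OF _ lt, of "1/p"] S Dp by auto
  have "y powr (1 / p - 1) \<le> z powr (1 / p - 1)"
    using z y S p by (intro powr_mono2') (auto simp: field_simps)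
  then have "(t - 1) * D * (1/p * y powr (1 / p - 1)) \<le> (t - 1) * D * (1/p * z powr (1 / p - 1))"
    using Dp tp p by (intro mult_left_mono) auto
  moreover have "S + t * D - (S + D) = (t - 1) * D" by (simp add: algebra_simps)
  moreover have "t * (D * (1/p * z powr (1 / p - 1))) = D * (1/p * z powr (1 / p - 1)) + (t - 1) * D * (1/p * z powr (1 / p - 1))"
    by (simp add: algebra_simps diff_divide_distrib)
  ultimately show ?thesis using z(3) y(3) unfolding kf_def
    by (simp only: add_diff_cancel_left')
qed

lemma convex_abspow: "1 < p \<Longrightarrow> convex_on UNIV (\<lambda>t::real. \<bar>t\<bar> powr p)"
  by (rule convex_on_realI[where f' = "\<lambda>z. p * psi (p - 1) z"])
     (auto intro: deriv_abspow mult_left_mono simp: less_imp_le psi_strict_mono le_less)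



lemma conv_pt:
  fixes p a b th :: real
  assumes p: "1 < p" and th: "0 < th" "th < 1"
  shows "\<bar>a + b\<bar> powr p \<le> (1 - th) powr (1 - p) * \<bar>a\<bar> powr p + th powr (1 - p) * \<bar>b\<bar> powr p"
proof -
  have "\<bar>(1 - th) *\<^sub>R (a / (1 - th)) + th *\<^sub>R (b / th)\<bar> powr p
      \<le> (1 - th) * \<bar>a / (1 - th)\<bar> powr p + th * \<bar>b / th\<bar> powr p"
    using convex_onD[OF convex_abspow[OF p], of th "a / (1 - th)" "b / th"] th by simp
  moreover have "(1 - th) *\<^sub>R (a / (1 - th)) + th *\<^sub>R (b / th) = a + b" using th by simp
  moreover have "(1 - th) * \<bar>a / (1 - th)\<bar> powr p = (1 - th) powr (1 - p) * \<bar>a\<bar> powr p"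
    using th by (simp add: powr_divide powr_diff)
  moreover have "th * \<bar>b / th\<bar> powr p = th powr (1 - p) * \<bar>b\<bar> powr p"
    using th by (simp add: powr_divide powr_diff)
  ultimately show ?thesis by simp
qed

definition Sp :: "real \<Rightarrow> real^'n \<Rightarrow> real" where
  "Sp p x = (\<Sum>i\<in>UNIV. \<bar>x $ i\<bar> powr p)"

definition Nv :: "real \<Rightarrow> real^'n \<Rightarrow> real^'n" where
  "Nv p x = (\<chi> i. Sp p x powr (1 / p - 1) * psi (p - 1) (x $ i))"

lemma pnorm_Sp: "pnorm p x = Sp p x powr (1 / p)"
  by (simp add: pnorm_def Sp_def)

lemma Sp_nonneg: "0 \<le> Sp p x"
  by (simp add: Sp_def sum_nonneg)

lemma Sp_pos: "x \<noteq> 0 \<Longrightarrow> 0 < Sp p x"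
proof -
  assume "x \<noteq> 0"
  then obtain i where i: "x $ i \<noteq> 0" by (auto simp: vec_eq_iff)
  show ?thesis unfolding Sp_def
    by (rule sum_pos2[of UNIV i]) (use i in auto)
qed

lemma Sp_pnorm: "0 < p \<Longrightarrow> Sp p x = pnorm p x powr p"
  by (simp add: pnorm_Sp powr_powr Sp_nonneg)

lemma has_der_pnorm:
  fixes x :: "real^'n"
  assumes p: "1 < p" and x: "x \<noteq> 0"
  shows "(pnorm p has_derivative (\<lambda>h. Nv p x \<bullet> h)) (at x)"
proof -
  have dS: "(Sp p has_derivative (\<lambda>h. \<Sum>i\<in>UNIV. h $ i * (p * psi (p - 1) (x $ i)))) (at x)"
    unfolding Sp_def[abs_def]
  proof (rule has_derivative_sum)
    fix i
    show "((\<lambda>x. \<bar>x $ i\<bar> powr p) has_derivative (\<lambda>h. h $ i * (p * psi (p - 1) (x $ i)))) (at x)"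
      by (rule DERIV_compose_FDERIV[OF deriv_abspow[OF p], where g="\<lambda>y. y $ i"])
         (intro bounded_linear_imp_has_derivative bounded_linear_vec_nth)
  qed
  have dR: "((\<lambda>s. s powr (1 / p)) has_real_derivative 1 / p * Sp p x powr (1 / p - 1)) (at (Sp p x))"
    using Sp_pos[OF x] by (rule has_real_derivative_powr)
  have d: "((\<lambda>y. Sp p y powr (1 / p)) has_derivative
      (\<lambda>h. (\<Sum>i\<in>UNIV. h $ i * (p * psi (p - 1) (x $ i))) * (1 / p * Sp p x powr (1 / p - 1)))) (at x)"
    by (rule DERIV_compose_FDERIV[OF dR dS])
  have eq: "(\<lambda>h. (\<Sum>i\<in>UNIV. h $ i * (p * psi (p - 1) (x $ i))) * (1 / p * Sp p x powr (1 / p - 1)))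
      = (\<lambda>h. Nv p x \<bullet> h)"
  proof (rule ext)
    fix h :: "real^'n"
    have "(\<Sum>i\<in>UNIV. h $ i * (p * psi (p - 1) (x $ i))) * (1 / p * Sp p x powr (1 / p - 1))
        = (\<Sum>i\<in>UNIV. h $ i * (p * psi (p - 1) (x $ i)) * (1 / p * Sp p x powr (1 / p - 1)))"
      by (rule sum_distrib_right)
    also have "\<dots> = (\<Sum>i\<in>UNIV. Sp p x powr (1 / p - 1) * psi (p - 1) (x $ i) * h $ i)"
      using p by (intro sum.cong) auto
    finally show "(\<Sum>i\<in>UNIV. h $ i * (p * psi (p - 1) (x $ i))) * (1 / p * Sp p x powr (1 / p - 1))
        = Nv p x \<bullet> h" by (simp add: Nv_def inner_vec_def)
  qed
  have pn: "pnorm p = (\<lambda>y. Sp p y powr (1 / p))" by (rule ext) (simp add: pnorm_Sp)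
  show ?thesis unfolding pn using d unfolding eq .
qed

lemma grad_pnorm:
  fixes x :: "real^'n"
  assumes p: "1 < p" and x: "x \<noteq> 0"
  shows "grad (pnorm p) x = Nv p x"
  unfolding grad_def
proof (rule some_equality)
  show "(pnorm p has_derivative (\<lambda>y. Nv p x \<bullet> y)) (at x)" by (rule has_der_pnorm[OF p x])
next
  fix g assume "(pnorm p has_derivative (\<lambda>y. g \<bullet> y)) (at x)"
  then have "(\<lambda>y. g \<bullet> y) = (\<lambda>y. Nv p x \<bullet> y)"
    using has_der_pnorm[OF p x] by (rule has_derivative_unique)
  then have "g \<bullet> (g - Nv p x) = Nv p x \<bullet> (g - Nv p x)" by metis
  then have "(g - Nv p x) \<bullet> (g - Nv p x) = 0" by (simp add: inner_diff_left)
  then show "g = Nv p x" by simp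
qed

lemma psi_mul_self: "1 < p \<Longrightarrow> z * psi (p - 1) z = \<bar>z\<bar> powr p"
proof (cases "z = 0")
  case False
  assume p: "1 < p"
  have "\<bar>z\<bar> powr p = \<bar>z\<bar> * \<bar>z\<bar> powr (p - 1)" using False by (intro powr_split1) simp
  moreover have "z * sgn z = \<bar>z\<bar>" by (simp add: abs_sgn mult.commute)
  ultimately show ?thesis by (simp add: psi_def mult.assoc[symmetric])
qed simp

lemma x_dot_N:
  fixes x :: "real^'n"
  assumes p: "1 < p" and x: "x \<noteq> 0"
  shows "x \<bullet> Nv p x = Sp p x powr (1 / p)"
proof -
  have "x \<bullet> Nv p x = (\<Sum>i\<in>UNIV. Sp p x powr (1 / p - 1) * (x $ i * psi (p - 1) (x $ i)))"
    by (simp add: Nv_def inner_vec_def algebra_simps)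
  also have "\<dots> = Sp p x powr (1 / p - 1) * Sp p x"
    using p by (simp add: psi_mul_self Sp_def sum_distrib_left)
  also have "\<dots> = Sp p x powr (1 / p)"
    using powr_split1[OF Sp_pos[OF x], of p "1 / p"] by simp
  finally show ?thesis .
qed

lemma y_dot_N:
  fixes x y :: "real^'n"
  shows "y \<bullet> Nv p x = Sp p x powr (1 / p - 1) * (\<Sum>i\<in>UNIV. psi (p - 1) (x $ i) * y $ i)"
  by (simp add: Nv_def inner_vec_def sum_distrib_left algebra_simps)

lemma Sp_shift:
  fixes x y :: "real^'n"
  assumes tan: "(\<Sum>i\<in>UNIV. psi (p - 1) (x $ i) * y $ i) = 0"
  shows "Sp p (x + t *\<^sub>R y) = Sp p x + (\<Sum>i\<in>UNIV. gf p (x $ i) (t * y $ i))"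
proof -
  have "\<And>i. \<bar>(x + t *\<^sub>R y) $ i\<bar> powr p = \<bar>x $ i\<bar> powr p + gf p (x $ i) (t * y $ i)
            + (p * t) * (psi (p - 1) (x $ i) * y $ i)"
    by (simp add: gf_def algebra_simps)
  then have "Sp p (x + t *\<^sub>R y) = (\<Sum>i\<in>UNIV. \<bar>x $ i\<bar> powr p + gf p (x $ i) (t * y $ i)
            + (p * t) * (psi (p - 1) (x $ i) * y $ i))"
    by (simp add: Sp_def)
  also have "\<dots> = Sp p x + (\<Sum>i\<in>UNIV. gf p (x $ i) (t * y $ i))
            + (p * t) * (\<Sum>i\<in>UNIV. psi (p - 1) (x $ i) * y $ i)"
    by (simp add: sum.distrib sum_distrib_left Sp_def)
  finally show ?thesis using tan by simp
qed

lemma hfun_eq: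
  fixes x y :: "real^'n"
  assumes p: "1 < p" and x: "x \<noteq> 0" and tan: "y \<bullet> grad (pnorm p) x = 0"
  shows "hfun (pnorm p) x (x + t *\<^sub>R y) = kf p (Sp p x) (\<Sum>i\<in>UNIV. gf p (x $ i) (t * y $ i))"
proof -
  have g: "grad (pnorm p) x = Nv p x" by (rule grad_pnorm[OF p x])
  have yN: "y \<bullet> Nv p x = 0" using tan g by simp
  have "0 < Sp p x powr (1 / p - 1)" using Sp_pos[OF x, of p] by simp
  then have t0: "(\<Sum>i\<in>UNIV. psi (p - 1) (x $ i) * y $ i) = 0" using yN y_dot_N[of y p x] by simp
  have "hfun (pnorm p) x (x + t *\<^sub>R y) = Sp p (x + t *\<^sub>R y) powr (1 / p) - (x \<bullet> Nv p x + t * (y \<bullet> Nv p x))"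
    by (simp add: hfun_def g pnorm_Sp inner_add_left)
  also have "\<dots> = kf p (Sp p x) (\<Sum>i\<in>UNIV. gf p (x $ i) (t * y $ i))"
    using x_dot_N[OF p x] yN Sp_shift[OF t0, of t] by (simp add: kf_def)
  finally show ?thesis .
qed

lemma D_nonneg: "1 < p \<Longrightarrow> 0 \<le> (\<Sum>i\<in>UNIV. gf p (x $ i) (t * (y::real^'n) $ i))"
proof -
  assume p: "1 < p"
  show ?thesis by (rule sum_nonneg) (rule gf_nonneg[OF p])
qed

lemma Sp_le:
  fixes y :: "real^'n"
  assumes p: "1 < p" and r: "0 \<le> r" and le: "pnorm p y \<le> r * pnorm p x"
  shows "Sp p y \<le> r powr p * Sp p x"
proof -
  have "Sp p y = pnorm p y powr p" using p by (simp add: Sp_pnorm)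
  also have "\<dots> \<le> (r * pnorm p x) powr p" using le p by (intro powr_mono2) (auto simp: pnorm_Sp)
  also have "\<dots> = r powr p * pnorm p x powr p" using r by (intro powr_mult) (simp_all add: pnorm_Sp)?
  also have "\<dots> = r powr p * Sp p x" using p Sp_pnorm[of p x] by simp
  finally show ?thesis .
qed

lemma lin_aux: "Sxy = S + (D::real) \<Longrightarrow> Sxy \<le> A * S + B * Y \<Longrightarrow> B * Y \<le> B * (R * S) \<Longrightarrow> D \<le> (A - 1 + B * R) * S"
proof -
  assume a: "Sxy = S + D" "Sxy \<le> A * S + B * Y" "B * Y \<le> B * (R * S)"
  have "(A - 1 + B * R) * S = A * S - S + B * (R * S)" by (simp add: algebra_simps)
  with a show ?thesis by linarith
qed

lemma smallness:
  fixes x y :: "real^'n"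
  assumes p: "1 < p" and tan: "(\<Sum>i\<in>UNIV. psi (p - 1) (x $ i) * y $ i) = 0"
    and th: "0 < th" "th < 1" and R: "Sp p y \<le> R * Sp p x"
  shows "(\<Sum>i\<in>UNIV. gf p (x $ i) (1 * y $ i)) \<le> ((1 - th) powr (1 - p) - 1 + th powr (1 - p) * R) * Sp p x"
proof -
  have "Sp p (x + 1 *\<^sub>R y) = Sp p x + (\<Sum>i\<in>UNIV. gf p (x $ i) (1 * y $ i))"
    by (rule Sp_shift[OF tan])
  moreover have "Sp p (x + 1 *\<^sub>R y) \<le> (1 - th) powr (1 - p) * Sp p x + th powr (1 - p) * Sp p y"
  proof -
    have "Sp p (x + 1 *\<^sub>R y) \<le> (\<Sum>i\<in>UNIV. (1 - th) powr (1 - p) * \<bar>x $ i\<bar> powr p + th powr (1 - p) * \<bar>y $ i\<bar> powr p)"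
      unfolding Sp_def by (intro sum_mono) (simp add: conv_pt[OF p th])
    also have "\<dots> = (1 - th) powr (1 - p) * Sp p x + th powr (1 - p) * Sp p y"
      by (simp add: Sp_def sum.distrib sum_distrib_left)
    finally show ?thesis .
  qed
  moreover have "th powr (1 - p) * Sp p y \<le> th powr (1 - p) * (R * Sp p x)"
    using R by (intro mult_left_mono) auto
  ultimately show ?thesis by (intro lin_aux)
qed



lemma doubling_pnorm:
  assumes p: "1 < p"
  shows "doubling_tangent (pnorm p :: real^'n \<Rightarrow> real)"
  unfolding doubling_tangent_def
proof (intro exI conjI allI impI)
  define C where "C = Cq (p - 1)"
  have C: "1 \<le> C" using Cq_ge1[of "p - 1"] p by (simp add: C_def)
  show "0 < 2 + 2 * C" using C by simp
  show "(0::real) < 1" by simp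
  fix x y :: "real^'n"
  assume x: "x \<noteq> 0" and tan: "y \<bullet> grad (pnorm p) x = 0"
  define S where "S = Sp p x"
  define D1 where "D1 = (\<Sum>i\<in>UNIV. gf p (x $ i) (1 * y $ i))"
  define D2 where "D2 = (\<Sum>i\<in>UNIV. gf p (x $ i) (2 * y $ i))"
  have S: "0 < S" using Sp_pos[OF x] by (simp add: S_def)
  have h1: "hfun (pnorm p) x (x + y) = kf p S D1"
    using hfun_eq[OF p x tan, of 1] by (simp add: S_def D1_def)
  have h2: "hfun (pnorm p) x (x + 2 *\<^sub>R y) = kf p S D2"
    using hfun_eq[OF p x tan, of 2] by (simp add: S_def D2_def)
  have D1n: "0 \<le> D1" unfolding D1_def by (rule D_nonneg[OF p])
  have D2n: "0 \<le> D2" unfolding D2_def by (rule D_nonneg[OF p])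
  have "D2 \<le> (\<Sum>i\<in>UNIV. (2 + 2 * C) * gf p (x $ i) (1 * y $ i))"
    unfolding D2_def C_def by (intro sum_mono) (simp add: gf_doub[OF p])
  then have D21: "D2 \<le> (2 + 2 * C) * D1" by (simp add: D1_def sum_distrib_left)
  have "kf p S D2 \<le> kf p S ((2 + 2 * C) * D1)" by (rule kf_mono[OF p S D2n D21])
  also have "\<dots> \<le> (2 + 2 * C) * kf p S D1" using C by (intro kf_sub[OF p S D1n]) simp
  finally show "hfun (pnorm p) x (x + 2 *\<^sub>R y) \<le> (2 + 2 * C) * hfun (pnorm p) x (x + y)"
    using h1 h2 by simp
qed

lemma balanced_pnorm:
  assumes p: "1 < p"
  shows "balanced_tangent (pnorm p :: real^'n \<Rightarrow> real)"
  unfolding balanced_tangent_def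
proof (intro exI conjI allI impI)
  define C where "C = Cq (p - 1)"
  have C: "1 \<le> C" using Cq_ge1[of "p - 1"] p by (simp add: C_def)
  show "(0::real) < 1" by simp
  show "0 < C" using C by simp
  fix x y :: "real^'n"
  assume x: "x \<noteq> 0" and tan: "y \<bullet> grad (pnorm p) x = 0"
  define S where "S = Sp p x"
  define D1 where "D1 = (\<Sum>i\<in>UNIV. gf p (x $ i) (1 * y $ i))"
  define Dm where "Dm = (\<Sum>i\<in>UNIV. gf p (x $ i) (- 1 * y $ i))"
  have S: "0 < S" using Sp_pos[OF x] by (simp add: S_def)
  have h1: "hfun (pnorm p) x (x + y) = kf p S D1"
    using hfun_eq[OF p x tan, of 1] by (simp add: S_def D1_def)
  have "x + (- 1) *\<^sub>R y = x - y" by simp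
  then have h2: "hfun (pnorm p) x (x - y) = kf p S Dm"
    using hfun_eq[OF p x tan, of "- 1"] by (simp add: S_def Dm_def)
  have D1n: "0 \<le> D1" unfolding D1_def by (rule D_nonneg[OF p])
  have Dmn: "0 \<le> Dm" unfolding Dm_def by (rule D_nonneg[OF p])
  have "D1 \<le> (\<Sum>i\<in>UNIV. C * gf p (x $ i) (- 1 * y $ i))"
    unfolding D1_def C_def by (intro sum_mono) (simp add: gf_bal[OF p])
  then have D1m: "D1 \<le> C * Dm" by (simp add: Dm_def sum_distrib_left)
  have "kf p S D1 \<le> kf p S (C * Dm)" by (rule kf_mono[OF p S D1n D1m])
  also have "\<dots> \<le> C * kf p S Dm" using C by (intro kf_sub[OF p S Dmn]) simp
  finally show "hfun (pnorm p) x (x + y) \<le> C * hfun (pnorm p) x (x - y)"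
    using h1 h2 by simp
qed

lemma tan_sum:
  fixes x y :: "real^'n"
  assumes p: "1 < p" and x: "x \<noteq> 0" and tan: "y \<bullet> grad (pnorm p) x = 0"
  shows "(\<Sum>i\<in>UNIV. psi (p - 1) (x $ i) * y $ i) = 0"
proof -
  have yN: "y \<bullet> Nv p x = 0" using tan grad_pnorm[OF p x] by simp
  have "0 < Sp p x powr (1 / p - 1)" using Sp_pos[OF x, of p] by simp
  then show ?thesis using yN y_dot_N[of y p x] by simp
qed

lemma geom_pnorm:
  assumes p: "1 < p"
  shows "geom_convex_tangent (pnorm p :: real^'n \<Rightarrow> real)"
proof -
  define C where "C = Cq (p - 1)"
  have C: "1 \<le> C" using Cq_ge1[of "p - 1"] p by (simp add: C_def)
  define lam where "lam = 2 + 2 / C"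
  have lam: "2 < lam" using C by (simp add: lam_def)
  define Lam where "Lam = (lam + 2) / 2"
  define bet where "bet = 2 * lam / (lam + 2)"
  have bet: "1 < bet" using lam by (simp add: bet_def field_simps)
  define e where "e = 1 / p - 1"
  have e: "e \<le> 0" using p by (simp add: e_def)
  define rho where "rho = bet powr (p / (p - 1))"
  have rho: "1 < rho"
  proof -
    have "bet powr 0 < bet powr (p / (p - 1))" using p bet by (intro powr_less_mono) auto
    then show ?thesis using bet by (simp add: rho_def)
  qed
  have rhoe: "rho powr e = 1 / bet"
  proof -
    have "p / (p - 1) * e = - 1" using p by (simp add: e_def field_simps)
    then have "rho powr e = bet powr (- 1)" by (simp add: rho_def powr_powr)
    also have "\<dots> = 1 / bet" using bet by (simp add: powr_minus_divide)
    finally show ?thesis .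
  qed
  have LamEq: "lam * (1 / bet) = Lam" using lam by (simp add: bet_def Lam_def field_simps)
  define del where "del = (rho - 1) / lam"
  have del: "0 < del" using rho lam by (simp add: del_def)
  have lamdel: "lam * del = rho - 1" using lam by (simp add: del_def)
  define th where "th = 1 - (1 + del / 2) powr (1 / (1 - p))"
  have thb: "0 < th" "th < 1"
  proof -
    have "(1 + del / 2) powr (1 / (1 - p)) < (1 + del / 2) powr 0"
      using p del by (intro powr_less_mono) (auto simp: divide_neg_pos)
    then show "0 < th" using del by (simp add: th_def)
    show "th < 1" using del by (simp add: th_def)
  qed
  have theq: "(1 - th) powr (1 - p) = 1 + del / 2"
  proof -
    have "1 / (1 - p) * (1 - p) = 1" using p by simp
    then show ?thesis using del by (simp add: th_def powr_powr)
  qed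
  define r where "r = (del / 2 * th powr (p - 1)) powr (1 / p)"
  have r: "0 < r" using del thb by (simp add: r_def)
  have req: "th powr (1 - p) * r powr p = del / 2"
  proof -
    have rp: "r powr p = del / 2 * th powr (p - 1)" using p del thb by (simp add: r_def powr_powr)
    have one: "th powr (1 - p) * th powr (p - 1) = 1" using thb by (simp add: powr_add[symmetric])
    have "th powr (1 - p) * r powr p = del / 2 * (th powr (1 - p) * th powr (p - 1))"
      unfolding rp by (simp only: mult_ac)
    then show ?thesis unfolding one by simp
  qed
  show ?thesis unfolding geom_convex_tangent_def
  proof (rule exI[of _ Lam], rule conjI)
    show "2 < Lam" using lam by (simp add: Lam_def)
  next
    show "\<exists>r>0. \<forall>(x::real^'n) y. x \<noteq> 0 \<longrightarrow> pnorm p y \<le> r * pnorm p x \<longrightarrow>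
      y \<bullet> grad (pnorm p) x = 0 \<longrightarrow> hfun (pnorm p) x (x + 2 *\<^sub>R y) \<ge> Lam * hfun (pnorm p) x (x + y)"
    proof (intro exI[of _ r] conjI allI impI)
    show "0 < r" by (rule r)
    fix x y :: "real^'n"
    assume x: "x \<noteq> 0" and le: "pnorm p y \<le> r * pnorm p x" and tan: "y \<bullet> grad (pnorm p) x = 0"
    define S where "S = Sp p x"
    define D1 where "D1 = (\<Sum>i\<in>UNIV. gf p (x $ i) (1 * y $ i))"
    define D2 where "D2 = (\<Sum>i\<in>UNIV. gf p (x $ i) (2 * y $ i))"
    have S: "0 < S" using Sp_pos[OF x] by (simp add: S_def)
    have h1: "hfun (pnorm p) x (x + y) = kf p S D1"
      using hfun_eq[OF p x tan, of 1] by (simp add: S_def D1_def)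
    have h2: "hfun (pnorm p) x (x + 2 *\<^sub>R y) = kf p S D2"
      using hfun_eq[OF p x tan, of 2] by (simp add: S_def D2_def)
    have D1n: "0 \<le> D1" unfolding D1_def by (rule D_nonneg[OF p])
    have t0: "(\<Sum>i\<in>UNIV. psi (p - 1) (x $ i) * y $ i) = 0" by (rule tan_sum[OF p x tan])
    have Spy: "Sp p y \<le> r powr p * S" unfolding S_def using r le by (intro Sp_le[OF p]) auto
    have "D1 \<le> ((1 - th) powr (1 - p) - 1 + th powr (1 - p) * r powr p) * S"
      unfolding D1_def S_def by (rule smallness[OF p t0 thb Spy[unfolded S_def]])
    then have small: "D1 \<le> del * S" using theq req by simp
    have "(\<Sum>i\<in>UNIV. lam * gf p (x $ i) (1 * y $ i)) \<le> D2"
      unfolding D2_def lam_def C_def by (intro sum_mono) (simp add: gf_conv[OF p])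
    then have D21: "lam * D1 \<le> D2" by (simp add: D1_def sum_distrib_left)
    have lD1: "0 \<le> lam * D1" using lam D1n by simp
    have "kf p S D1 \<le> D1 / p * S powr e" using kf_upper[OF p S D1n] by (simp add: e_def)
    then have k1: "Lam * kf p S D1 \<le> Lam * (D1 / p * S powr e)"
      using lam by (intro mult_left_mono) (auto simp: Lam_def)
    have "S + lam * D1 \<le> rho * S"
    proof -
      have "lam * D1 \<le> lam * (del * S)" using small lam by (intro mult_left_mono) auto
      moreover have "rho * S = (1 + lam * del) * S" using lamdel by simp
      moreover have "(1 + lam * del) * S = S + lam * (del * S)" by (simp add: algebra_simps)
      ultimately show ?thesis by linarith
    qed
    then have "(rho * S) powr e \<le> (S + lam * D1) powr e"
      using e S lD1 by (intro powr_mono2') auto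
    then have "rho powr e * S powr e \<le> (S + lam * D1) powr e"
      using rho S by (simp add: powr_mult)
    then have "S powr e / bet \<le> (S + lam * D1) powr e" using rhoe by simp
    then have k2: "lam * D1 / p * (S powr e / bet) \<le> lam * D1 / p * (S + lam * D1) powr e"
      using lD1 p by (intro mult_left_mono) auto
    have k3: "lam * D1 / p * (S + lam * D1) powr e \<le> kf p S (lam * D1)"
      using kf_lower[OF p S lD1] by (simp add: e_def)
    have k4: "kf p S (lam * D1) \<le> kf p S D2" by (rule kf_mono[OF p S lD1 D21])
    have k5: "lam * D1 / p * (S powr e / bet) = Lam * (D1 / p * S powr e)"
      using LamEq[symmetric] by (simp add: field_simps)
    show "Lam * hfun (pnorm p) x (x + y) \<le> hfun (pnorm p) x (x + 2 *\<^sub>R y)"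
      unfolding h1 h2 using k1 k2 k3 k4 k5 by linarith
  qed
  qed
qed

theorem theorem6p7:
  fixes p :: real
  assumes "1 < p"
  shows "(\<forall>x::real^'n. x \<noteq> 0 \<longrightarrow> pnorm p differentiable (at x))
    \<and> geom_convex_tangent (pnorm p :: real^'n \<Rightarrow> real)
    \<and> doubling_tangent (pnorm p :: real^'n \<Rightarrow> real)
    \<and> balanced_tangent (pnorm p :: real^'n \<Rightarrow> real)"
proof (intro conjI allI impI)
  fix x :: "real^'n" assume "x \<noteq> 0"
  then show "pnorm p differentiable (at x)"
    unfolding differentiable_def using has_der_pnorm[OF assms] by blast
qed (use assms geom_pnorm doubling_pnorm balanced_pnorm in auto)


end
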